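(* There exists an atomic Puiseux monoid $M$ such that (1) $M \subseteq \mathbb{Z}\big[\tfrac{1}{2}, \tfrac{1}{3}\big]$, and (2) $\tfrac{1}{2^n} \in M$ for every $n \in \mathbb{N}_0$.
   Context: A Puiseux monoid is a submonoid of $(\mathbb{Q}_{\ge 0}, +)$. An atom of a monoid $M$ is a nonzero element $a$ (in a Puiseux monoid the only invertible element is $0$) such that $a = x+y$ with $x,y\in M$ implies $x = 0$ or $y = 0$; $M$ is atomic if every nonzero element is a finite sum of atoms. $\mathbb{N}_0 = \{0,1,2,\dots\}$. *)

theory Defs
  imports Complex_Main "HOL-Library.Multiset"
begin

definition puiseux_monoid :: "rat set \<Rightarrow> bool" where
  "puiseux_monoid M \<longleftrightarrow> (\<forall>x\<in>M. 0 \<le> x) \<and> 0 \<in> M \<and> (\<forall>x\<in>M. \<forall>y\<in>M. x + y \<in> M)"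

text \<open>Atoms of a Puiseux monoid (the only unit is 0).\<close>
definition atom_of :: "rat set \<Rightarrow> rat \<Rightarrow> bool" where
  "atom_of M a \<longleftrightarrow> a \<in> M \<and> a \<noteq> 0 \<and>
     (\<forall>x\<in>M. \<forall>y\<in>M. a = x + y \<longrightarrow> x = 0 \<or> y = 0)"

definition atomic_monoid :: "rat set \<Rightarrow> bool" where
  "atomic_monoid M \<longleftrightarrow> (\<forall>x\<in>M. x \<noteq> 0 \<longrightarrow>
     (\<exists>A :: rat multiset. A \<noteq> {#} \<and> (\<forall>a\<in>#A. atom_of M a) \<and> sum_mset A = x))"

definition Z_half_third :: "rat set" where
  "Z_half_third = {of_int k / (2 ^ m * 3 ^ n) | k m n. True}"

end

theory Submission
  imports Defs
begin

definition xx :: "nat \<Rightarrow> rat" where "xx k = (1/2)^k"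
definition yy :: "nat \<Rightarrow> rat" where "yy k = (1/3)^k"
definition zz :: "nat \<Rightarrow> rat" where "zz k = (1/4)^k"
definition aa :: "nat \<Rightarrow> rat" where "aa k = yy k - zz k / 2"
definition bb :: "nat \<Rightarrow> rat" where "bb k = xx k - yy k + zz k / 2"

lemma pos: "0 < xx k" "0 < yy k" "0 < zz k"
  by (simp_all add: xx_def yy_def zz_def)

lemma pos_le: "0 \<le> xx k" "0 \<le> yy k" "0 \<le> zz k"
  using pos less_imp_le by blast+

lemma Sucs: "xx (Suc k) = xx k / 2" "yy (Suc k) = yy k / 3" "zz (Suc k) = zz k / 4"
  by (simp_all add: xx_def yy_def zz_def)

lemma yx: "yy k = (2/3)^k * xx k"
  unfolding xx_def yy_def by (simp add: power_mult_distrib[symmetric])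

lemma zy: "zz k = (3/4)^k * yy k"
  unfolding zz_def yy_def by (simp add: power_mult_distrib[symmetric])

lemma zx: "zz k = xx k * xx k"
  unfolding zz_def xx_def by (simp add: power_mult_distrib[symmetric])

lemma le_basic: assumes "1 \<le> k"
  shows "yy k \<le> (2/3) * xx k" "zz k \<le> (3/4) * yy k" "zz k \<le> xx k / 2" "xx k \<le> 1/2"
    "yy k \<le> 1/3"
proof -
  have h1: "(2/3::rat)^k \<le> (2/3)^1" by (rule power_decreasing) (use assms in auto)
  have h2: "(3/4::rat)^k \<le> (3/4)^1" by (rule power_decreasing) (use assms in auto)
  have h3: "(1/2::rat)^k \<le> (1/2)^1" by (rule power_decreasing) (use assms in auto)
  have h4: "(1/3::rat)^k \<le> (1/3)^1" by (rule power_decreasing) (use assms in auto)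
  show "yy k \<le> (2/3) * xx k" unfolding yx using h1 pos(1)[of k]
    by (intro mult_right_mono) auto
  show "zz k \<le> (3/4) * yy k" unfolding zy using h2 pos(2)[of k]
    by (intro mult_right_mono) auto
  show "xx k \<le> 1/2" using h3 by (simp add: xx_def)
  show "yy k \<le> 1/3" using h4 by (simp add: yy_def)
  show "zz k \<le> xx k / 2" unfolding zx using \<open>xx k \<le> 1/2\<close> pos(1)[of k]
    by (metis mult.commute mult_left_mono less_imp_le times_divide_eq_right mult.right_neutral divide_inverse inverse_eq_divide)
qed

lemma ab_pos: "1 \<le> k \<Longrightarrow> 0 < aa k" "1 \<le> k \<Longrightarrow> 0 < bb k"
proof -
  assume k: "1 \<le> k"
  have h: "zz k \<le> (3/4) * yy k" "yy k \<le> (2/3) * xx k" using le_basic[OF k] by auto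
  show "0 < aa k" using h pos[of k] unfolding aa_def by linarith
  show "0 < bb k" using h pos[of k] unfolding bb_def by linarith
qed

lemma aa_dec: "j < k \<Longrightarrow> aa k < aa j"
proof -
  assume "j < k"
  have "\<And>n. - aa n < - aa (Suc n)"
  proof -
    fix n
    have "(3/4::rat)^n \<le> 1" by (rule power_le_one) auto
    then have "zz n \<le> yy n" unfolding zy using pos_le(2)[of n] by (intro mult_left_le_one_le) auto
    then show "- aa n < - aa (Suc n)" using pos[of n] unfolding aa_def Sucs by linarith
  qed
  from lift_Suc_mono_less[of "\<lambda>n. - aa n", OF this \<open>j<k\<close>] show ?thesis by simp
qed

lemma bb_dec: "1 \<le> j \<Longrightarrow> j < k \<Longrightarrow> bb k < bb j"
proof -
  assume "1 \<le> j" "j < k"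
  have "\<And>n. n \<in> {1..} \<Longrightarrow> - bb n < - bb (Suc n)"
  proof -
    fix n :: nat assume "n \<in> {1..}"
    then have "1 \<le> n" by simp
    from le_basic[OF this] pos[of n] show "- bb n < - bb (Suc n)"
      unfolding bb_def Sucs by linarith
  qed
  from lift_Suc_mono_less_ivl[of "{1..}" "\<lambda>n. - bb n", OF this \<open>j<k\<close>] \<open>1\<le>j\<close> show ?thesis
    by (metis atLeastLessThan_iff atLeast_iff neg_less_iff_less order_trans subsetI)
qed

definition V :: "(nat \<Rightarrow> nat) \<Rightarrow> (nat \<Rightarrow> nat) \<Rightarrow> nat \<Rightarrow> rat" where
  "V m l K = (\<Sum>k\<in>{1..K}. of_nat (m k) * aa k + of_nat (l k) * bb k)"

definition SX :: "(nat \<Rightarrow> nat) \<Rightarrow> nat \<Rightarrow> rat" where "SX f K = (\<Sum>k\<in>{1..K}. of_nat (f k) * xx k)"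
definition SY :: "(nat \<Rightarrow> nat) \<Rightarrow> nat \<Rightarrow> rat" where "SY f K = (\<Sum>k\<in>{1..K}. of_nat (f k) * yy k)"
definition SZ :: "(nat \<Rightarrow> nat) \<Rightarrow> nat \<Rightarrow> rat" where "SZ f K = (\<Sum>k\<in>{1..K}. of_nat (f k) * zz k)"

lemma V_split: "V m l K = SY m K - SZ m K / 2 + SX l K - SY l K + SZ l K / 2"
  unfolding V_def SX_def SY_def SZ_def aa_def bb_def
  by (simp add: algebra_simps sum.distrib sum_subtractf sum_divide_distrib)

lemma S_nonneg: "0 \<le> SX f K" "0 \<le> SY f K" "0 \<le> SZ f K"
  unfolding SX_def SY_def SZ_def using pos_le by (auto intro!: sum_nonneg)

lemma S_le: "SY f K \<le> (2/3) * SX f K" "SZ f K \<le> SY f K"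
proof -
  show "SY f K \<le> (2/3) * SX f K" unfolding SX_def SY_def sum_distrib_left
  proof (intro sum_mono)
    fix k assume "k \<in> {1..K}"
    then have "yy k \<le> (2/3) * xx k" using le_basic(1)[of k] by auto
    then have "of_nat (f k) * yy k \<le> of_nat (f k) * ((2/3) * xx k)" by (rule mult_left_mono) simp
    then show "of_nat (f k) * yy k \<le> (2/3) * (of_nat (f k) * xx k)" by (simp only: ac_simps)
  qed
  show "SZ f K \<le> SY f K" unfolding SZ_def SY_def
  proof (intro sum_mono)
    fix k assume "k \<in> {1..K}"
    then have "zz k \<le> yy k" using le_basic(2)[of k] pos[of k] by auto
    then show "of_nat (f k) * zz k \<le> of_nat (f k) * yy k" by (simp add: mult_left_mono)
  qed
qed

lemma pow_inv: "k \<le> E \<Longrightarrow> (c::rat) \<noteq> 0 \<Longrightarrow> c^E * (1/c)^k = c^(E-k)"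
proof -
  assume "k \<le> E" "c \<noteq> 0"
  then have "c^E = c^(E-k) * c^k" by (simp add: power_add[symmetric])
  then show ?thesis using \<open>c \<noteq> 0\<close> by (simp add: power_one_over field_simps)
qed

lemma I_X: "K \<le> E \<Longrightarrow> (2::rat)^E * SX f K \<in> \<int>"
  unfolding SX_def sum_distrib_left
proof (intro Ints_sum)
  fix k assume "K \<le> E" "k \<in> {1..K}"
  then have eq: "(2::rat)^E * (of_nat (f k) * xx k) = of_nat (f k) * 2^(E-k)"
    using pow_inv[of k E "2::rat"] unfolding xx_def by (simp add: algebra_simps)
  show "(2::rat)^E * (of_nat (f k) * xx k) \<in> \<int>" unfolding eq
    by (intro Ints_mult Ints_of_nat Ints_power Ints_numeral)
qed

lemma I_Y: "K \<le> E \<Longrightarrow> (3::rat)^E * SY f K \<in> \<int>"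
  unfolding SY_def sum_distrib_left
proof (intro Ints_sum)
  fix k assume "K \<le> E" "k \<in> {1..K}"
  then have eq: "(3::rat)^E * (of_nat (f k) * yy k) = of_nat (f k) * 3^(E-k)"
    using pow_inv[of k E "3::rat"] unfolding yy_def by (simp add: algebra_simps)
  show "(3::rat)^E * (of_nat (f k) * yy k) \<in> \<int>" unfolding eq
    by (intro Ints_mult Ints_of_nat Ints_power Ints_numeral)
qed

lemma I_Z: "K \<le> E \<Longrightarrow> (4::rat)^E * SZ f K \<in> \<int>"
  unfolding SZ_def sum_distrib_left
proof (intro Ints_sum)
  fix k assume "K \<le> E" "k \<in> {1..K}"
  then have eq: "(4::rat)^E * (of_nat (f k) * zz k) = of_nat (f k) * 4^(E-k)"
    using pow_inv[of k E "4::rat"] unfolding zz_def by (simp add: algebra_simps)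
  show "(4::rat)^E * (of_nat (f k) * zz k) \<in> \<int>" unfolding eq
    by (intro Ints_mult Ints_of_nat Ints_power Ints_numeral)
qed

lemma Ints_both: assumes "(3::rat)^a * N \<in> \<int>" "(2::rat)^b * N \<in> \<int>" shows "N \<in> \<int>"
proof -
  obtain p where p: "(3::rat)^a * N = of_int p" using assms(1) Ints_cases by metis
  obtain r where r: "(2::rat)^b * N = of_int r" using assms(2) Ints_cases by metis
  have "of_int (p * 2^b) = (of_int (r * 3^a) :: rat)"
    using p r by (simp add: algebra_simps) (metis mult.assoc mult.commute)
  then have e: "p * 2^b = r * 3^a" by (simp only: of_int_eq_iff)
  have "coprime ((3::int)^a) (2^b)" by simp
  moreover have "(3::int)^a dvd p * 2^b" using e by simp
  ultimately have "(3::int)^a dvd p" using coprime_dvd_mult_left_iff by blast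
  then obtain q where "p = 3^a * q" by (auto simp: dvd_def)
  then have "(3::rat)^a * N = 3^a * of_int q" using p by simp
  then have "N = of_int q" by simp
  then show ?thesis by simp
qed

lemma Ints_small: "(N::rat) \<in> \<int> \<Longrightarrow> -1 < N \<Longrightarrow> N < 1 \<Longrightarrow> N = 0"
proof -
  assume "N \<in> \<int>" "-1 < N" "N < 1"
  then obtain i where i: "N = of_int i" by (auto elim: Ints_cases)
  then have "-1 < i" "i < 1" using \<open>-1 < N\<close> \<open>N < 1\<close> by simp_all
  then have "i = 0" by simp
  then show "N = 0" using i by simp
qed

lemma term_le_V: "k \<in> {1..K} \<Longrightarrow> of_nat (m k) * aa k + of_nat (l k) * bb k \<le> V m l K"
  unfolding V_def
  by (rule member_le_sum) (auto intro!: add_nonneg_nonneg mult_nonneg_nonneg less_imp_le[OF ab_pos(1)] less_imp_le[OF ab_pos(2)])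

lemma trivial_case:
  assumes "n \<in> {1..K}" and V: "V m l K = of_nat (m n) * aa n + of_nat (l n) * bb n"
  shows "\<forall>k\<in>{1..K}. k \<noteq> n \<longrightarrow> m k = 0 \<and> l k = 0"
proof -
  let ?t = "\<lambda>k. of_nat (m k) * aa k + of_nat (l k) * bb k"
  have nn: "\<forall>k\<in>{1..K} - {n}. 0 \<le> ?t k"
    by (auto intro!: add_nonneg_nonneg mult_nonneg_nonneg less_imp_le[OF ab_pos(1)] less_imp_le[OF ab_pos(2)])
  have "V m l K = ?t n + sum ?t ({1..K} - {n})"
    unfolding V_def using assms(1) by (simp add: sum.remove)
  then have "sum ?t ({1..K} - {n}) = 0" using V by simp
  then have z: "\<forall>k\<in>{1..K} - {n}. ?t k = 0" using sum_nonneg_eq_0_iff[of "{1..K} - {n}" ?t] nn by auto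
  show ?thesis
  proof (intro ballI impI)
    fix k assume k: "k \<in> {1..K}" "k \<noteq> n"
    then have "?t k = 0" using z by simp
    moreover have "0 < aa k" "0 < bb k" using k ab_pos by auto
    moreover have "0 \<le> of_nat (m k) * aa k" "0 \<le> of_nat (l k) * bb k" using calculation(2,3) by simp_all
    ultimately have "of_nat (m k) * aa k = 0" "of_nat (l k) * bb k = 0" by linarith+
    then show "m k = 0 \<and> l k = 0" using \<open>0 < aa k\<close> \<open>0 < bb k\<close> by simp
  qed
qed

lemma key_a:
  assumes n: "1 \<le> n" and eqV: "aa n = V m l K"
  shows "\<forall>k\<in>{1..K}. l k = 0 \<and> m k = (if k = n then 1 else 0)"
proof -
  define My where "My = SY m K"
  define Mz where "Mz = SZ m K"
  define Lx where "Lx = SX l K"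
  define Ly where "Ly = SY l K"
  define Lz where "Lz = SZ l K"
  have VV: "aa n = My - Mz/2 + Lx - Ly + Lz/2"
    using eqV V_split unfolding My_def Mz_def Lx_def Ly_def Lz_def by simp
  have f: "0 \<le> My" "0 \<le> Mz" "0 \<le> Lx" "0 \<le> Ly" "0 \<le> Lz" "Mz \<le> My" "Ly \<le> (2/3) * Lx"
    unfolding My_def Mz_def Lx_def Ly_def Lz_def using S_nonneg S_le by auto
  have bn: "yy n \<le> 1/3" "0 < zz n" "0 < yy n" using le_basic[OF n] pos by auto
  define N where "N = My - Ly - yy n"
  define E where "E = K + n"
  have N2: "N = Mz/2 - Lx - Lz/2 - zz n/2" using VV unfolding N_def aa_def by simp
  have "(3::rat)^E * N = 3^E * SY m K - 3^E * SY l K - 3^E * yy n"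
    unfolding N_def My_def Ly_def by (simp add: algebra_simps)
  moreover have "(3::rat)^E * yy n \<in> \<int>"
    using pow_inv[of n E "3::rat"] unfolding yy_def E_def by simp
  ultimately have i3: "(3::rat)^E * N \<in> \<int>"
    using I_Y[of K E m] I_Y[of K E l] unfolding E_def by (simp add: Ints_diff)
  have p4: "(2::rat)^(2*E) = 4^E" "(2::rat)^(2*E+1) = 2 * 4^E" by (simp_all add: power_mult)
  have "(2::rat)^(2*E+1) * N = (4^E * SZ m K) - 2 * (4^E * SX l K) - 4^E * SZ l K - 4^E * zz n"
    unfolding N2 Mz_def Lx_def Lz_def p4 by (simp add: algebra_simps)
  moreover have "(4::rat)^E * zz n \<in> \<int>"
    using pow_inv[of n E "4::rat"] unfolding zz_def E_def by simp
  moreover have "(4::rat)^E * SX l K \<in> \<int>" using I_X[of K "2*E" l] p4(1) unfolding E_def by simp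
  ultimately have i2: "(2::rat)^(2*E+1) * N \<in> \<int>"
    using I_Z[of K E m] I_Z[of K E l] unfolding E_def
    by (simp add: Ints_diff Ints_mult)
  have "N = 0" using Ints_small[OF Ints_both[OF i3 i2]] N2 VV f bn unfolding aa_def by linarith
  then have E1: "My - Ly = yy n" and E2: "Mz/2 - Lx - Lz/2 = zz n/2" using N2 unfolding N_def by linarith+
  show ?thesis
  proof (cases "n \<in> {1..K} \<and> 1 \<le> m n")
    case True
    have t: "of_nat (m n) * aa n + of_nat (l n) * bb n \<le> V m l K" using True term_le_V by blast
    have an: "0 < aa n" "0 < bb n" using ab_pos n by auto
    have "m n = 1 \<and> l n = 0"
    proof (rule ccontr)
      assume "\<not> (m n = 1 \<and> l n = 0)"
      then have "2 \<le> m n \<or> 1 \<le> l n" using True by auto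
      then have "of_nat (m n) * aa n + of_nat (l n) * bb n > aa n"
      proof
        assume "2 \<le> m n"
        then have "(2::rat) * aa n \<le> of_nat (m n) * aa n" using an
          by (intro mult_right_mono) (auto simp: numeral_le_iff)
        moreover have "0 \<le> of_nat (l n) * bb n" "0 \<le> of_nat (m n) * aa n" using an by simp_all
        ultimately show ?thesis using an by linarith
      next
        assume "1 \<le> l n"
        then have "bb n \<le> of_nat (l n) * bb n" using an by (simp add: mult_le_cancel_right1)
        moreover have "aa n \<le> of_nat (m n) * aa n" using True an by (simp add: mult_le_cancel_right1)
        ultimately show ?thesis using an by linarith
      qed
      then show False using t eqV by linarith
    qed
    then have "V m l K = of_nat (m n) * aa n + of_nat (l n) * bb n" using eqV by simp
    from trivial_case[OF _ this] True \<open>m n = 1 \<and> l n = 0\<close> show ?thesis by auto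
  next
    case False
    have mk: "\<forall>k\<in>{1..K}. m k = 0 \<or> n < k"
    proof (intro ballI)
      fix k assume k: "k \<in> {1..K}"
      show "m k = 0 \<or> n < k"
      proof (rule ccontr)
        assume "\<not> (m k = 0 \<or> n < k)"
        then have "1 \<le> m k" "k \<le> n" by auto
        moreover have "k \<noteq> n" using False k \<open>1 \<le> m k\<close> by auto
        ultimately have "k < n" by simp
        then have "aa n < aa k" by (rule aa_dec)
        have "0 < aa k" "0 \<le> bb k" using k ab_pos[of k] by auto
        then have "aa k \<le> of_nat (m k) * aa k + of_nat (l k) * bb k"
        proof -
          have "aa k \<le> of_nat (m k) * aa k" using \<open>1 \<le> m k\<close> \<open>0 < aa k\<close> by (simp add: mult_le_cancel_right1)
          moreover have "0 \<le> of_nat (l k) * bb k" using \<open>0 \<le> bb k\<close> by simp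
          ultimately show ?thesis by linarith
        qed
        then show False using term_le_V[OF k, of m l] eqV \<open>aa n < aa k\<close> by linarith
      qed
    qed
    define c :: rat where "c = (3/4)^(Suc n)"
    have c1: "c \<le> 1" "0 \<le> c" unfolding c_def by (intro power_le_one; simp) simp
    have cy: "c * yy n = (3/4) * zz n" unfolding c_def zy by simp
    have "Mz \<le> c * My" unfolding Mz_def My_def SZ_def SY_def sum_distrib_left
    proof (intro sum_mono)
      fix k assume k: "k \<in> {1..K}"
      show "of_nat (m k) * zz k \<le> c * (of_nat (m k) * yy k)"
      proof (cases "m k = 0")
        case False
        from mk k have "m k = 0 \<or> n < k" by blast
        then have "Suc n \<le> k" using False by simp
        then have "(3/4::rat)^k \<le> c" unfolding c_def by (intro power_decreasing) auto
        then have "zz k \<le> c * yy k" unfolding zy using pos_le(2)[of k] by (rule mult_right_mono)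
        then have "of_nat (m k) * zz k \<le> of_nat (m k) * (c * yy k)" by (rule mult_left_mono) simp
        then show ?thesis by (simp only: ac_simps)
      qed simp
    qed
    moreover have "c * Ly \<le> Ly" using c1 f by (simp add: mult_left_le_one_le)
    moreover have "c * My = c * yy n + c * Ly"
    proof -
      have "My = yy n + Ly" using E1 by linarith
      then show ?thesis by (simp add: algebra_simps)
    qed
    ultimately show ?thesis using E1 E2 f cy bn by linarith
  qed
qed

lemma key_b:
  assumes n: "1 \<le> n" and eqV: "bb n = V m l K"
  shows "\<forall>k\<in>{1..K}. m k = 0 \<and> l k = (if k = n then 1 else 0)"
proof -
  define My where "My = SY m K"
  define Mz where "Mz = SZ m K"
  define Lx where "Lx = SX l K"
  define Ly where "Ly = SY l K"
  define Lz where "Lz = SZ l K"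
  have VV: "bb n = My - Mz/2 + Lx - Ly + Lz/2"
    using eqV V_split unfolding My_def Mz_def Lx_def Ly_def Lz_def by simp
  have f: "0 \<le> My" "0 \<le> Mz" "0 \<le> Lx" "0 \<le> Ly" "0 \<le> Lz" "Mz \<le> My" "Ly \<le> (2/3) * Lx"
    unfolding My_def Mz_def Lx_def Ly_def Lz_def using S_nonneg S_le by auto
  have bn: "xx n \<le> 1/2" "zz n \<le> (3/4) * yy n" "0 < zz n" "0 < yy n" "zz n \<le> xx n / 2"
    using le_basic[OF n] pos by auto
  define N where "N = My - Ly + yy n"
  define E where "E = K + n"
  have N2: "N = xx n + zz n/2 + Mz/2 - Lx - Lz/2" using VV unfolding N_def bb_def by simp
  have "(3::rat)^E * N = 3^E * SY m K - 3^E * SY l K + 3^E * yy n"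
    unfolding N_def My_def Ly_def by (simp add: algebra_simps)
  moreover have "(3::rat)^E * yy n \<in> \<int>"
    using pow_inv[of n E "3::rat"] unfolding yy_def E_def by simp
  ultimately have i3: "(3::rat)^E * N \<in> \<int>"
    using I_Y[of K E m] I_Y[of K E l] unfolding E_def by (simp add: Ints_diff Ints_add)
  have p4: "(2::rat)^(2*E) = 4^E" "(2::rat)^(2*E+1) = 2 * 4^E" by (simp_all add: power_mult)
  have "(2::rat)^(2*E+1) * N = 2 * (4^E * xx n) + 4^E * zz n + (4^E * SZ m K) - 2 * (4^E * SX l K) - 4^E * SZ l K"
    unfolding N2 Mz_def Lx_def Lz_def p4 by (simp add: algebra_simps)
  moreover have "(4::rat)^E * zz n \<in> \<int>"
    using pow_inv[of n E "4::rat"] unfolding zz_def E_def by simp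
  moreover have "(4::rat)^E * xx n \<in> \<int>"
    using pow_inv[of n "2*E" "2::rat"] p4(1) unfolding xx_def E_def by simp
  moreover have "(4::rat)^E * SX l K \<in> \<int>" using I_X[of K "2*E" l] p4(1) unfolding E_def by simp
  ultimately have i2: "(2::rat)^(2*E+1) * N \<in> \<int>"
    using I_Z[of K E m] I_Z[of K E l] unfolding E_def
    by (simp add: Ints_diff Ints_mult Ints_add)
  have "N = 0" using Ints_small[OF Ints_both[OF i3 i2]] N2 VV f bn unfolding bb_def by linarith
  then have E1: "My - Ly = - yy n" and E2: "Mz/2 - Lx - Lz/2 = - (xx n + zz n/2)"
    using N2 unfolding N_def by linarith+
  show ?thesis
  proof (cases "n \<in> {1..K} \<and> 1 \<le> l n")
    case True
    have t: "of_nat (m n) * aa n + of_nat (l n) * bb n \<le> V m l K" using True term_le_V by blast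
    have an: "0 < aa n" "0 < bb n" using ab_pos n by auto
    have "l n = 1 \<and> m n = 0"
    proof (rule ccontr)
      assume "\<not> (l n = 1 \<and> m n = 0)"
      then have "2 \<le> l n \<or> 1 \<le> m n" using True by auto
      then have "of_nat (m n) * aa n + of_nat (l n) * bb n > bb n"
      proof
        assume "2 \<le> l n"
        then have "(2::rat) * bb n \<le> of_nat (l n) * bb n" using an
          by (intro mult_right_mono) (auto simp: numeral_le_iff)
        moreover have "0 \<le> of_nat (l n) * bb n" "0 \<le> of_nat (m n) * aa n" using an by simp_all
        ultimately show ?thesis using an by linarith
      next
        assume "1 \<le> m n"
        then have "aa n \<le> of_nat (m n) * aa n" using an by (simp add: mult_le_cancel_right1)
        moreover have "bb n \<le> of_nat (l n) * bb n" using True an by (simp add: mult_le_cancel_right1)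
        ultimately show ?thesis using an by linarith
      qed
      then show False using t eqV by linarith
    qed
    then have "V m l K = of_nat (m n) * aa n + of_nat (l n) * bb n" using eqV by simp
    from trivial_case[OF _ this] True \<open>l n = 1 \<and> m n = 0\<close> show ?thesis by auto
  next
    case False
    have lk: "\<forall>k\<in>{1..K}. l k = 0 \<or> n < k"
    proof (intro ballI)
      fix k assume k: "k \<in> {1..K}"
      show "l k = 0 \<or> n < k"
      proof (rule ccontr)
        assume "\<not> (l k = 0 \<or> n < k)"
        then have "1 \<le> l k" "k \<le> n" by auto
        moreover have "k \<noteq> n" using False k \<open>1 \<le> l k\<close> by auto
        ultimately have "k < n" by simp
        then have "bb n < bb k" using k by (intro bb_dec) auto
        have "0 < bb k" "0 \<le> aa k" using k ab_pos[of k] by auto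
        then have "bb k \<le> of_nat (m k) * aa k + of_nat (l k) * bb k"
        proof -
          have "bb k \<le> of_nat (l k) * bb k" using \<open>1 \<le> l k\<close> \<open>0 < bb k\<close> by (simp add: mult_le_cancel_right1)
          moreover have "0 \<le> of_nat (m k) * aa k" using \<open>0 \<le> aa k\<close> by simp
          ultimately show ?thesis by linarith
        qed
        then show False using term_le_V[OF k, of m l] eqV \<open>bb n < bb k\<close> by linarith
      qed
    qed
    define d :: rat where "d = (2/3)^(Suc n)"
    have d1: "d \<le> 1" "0 \<le> d" unfolding d_def by (intro power_le_one; simp) simp
    have dx: "d * xx n = (2/3) * yy n" unfolding d_def yx by simp
    have "Ly \<le> d * Lx" unfolding Ly_def Lx_def SY_def SX_def sum_distrib_left
    proof (intro sum_mono)
      fix k assume k: "k \<in> {1..K}"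
      show "of_nat (l k) * yy k \<le> d * (of_nat (l k) * xx k)"
      proof (cases "l k = 0")
        case False
        from lk k have "l k = 0 \<or> n < k" by blast
        then have "Suc n \<le> k" using False by simp
        then have "(2/3::rat)^k \<le> d" unfolding d_def by (intro power_decreasing) auto
        then have "yy k \<le> d * xx k" unfolding yx using pos_le(1)[of k] by (rule mult_right_mono)
        then have "of_nat (l k) * yy k \<le> of_nat (l k) * (d * xx k)" by (rule mult_left_mono) simp
        then show ?thesis by (simp only: ac_simps)
      qed simp
    qed
    moreover have "d * Mz \<le> Mz" using d1 f by (simp add: mult_left_le_one_le)
    moreover have "0 \<le> d * Lz" using d1 f by simp
    moreover have "d * zz n \<le> d * (xx n / 2)" using d1(2) bn(5) by (rule mult_left_mono[rotated])
    moreover have "d * Lx + d * Lz / 2 = d * xx n + d * zz n / 2 + d * Mz / 2"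
    proof -
      have "Lx + Lz/2 = xx n + zz n/2 + Mz/2" using E2 by linarith
      then have "d * (Lx + Lz/2) = d * (xx n + zz n/2 + Mz/2)" by simp
      then show ?thesis by (simp add: algebra_simps)
    qed
    ultimately show ?thesis using E1 f dx bn by linarith
  qed
qed

lemma V_zero: "(\<forall>k\<in>{1..K}. m k = 0 \<and> l k = 0) \<Longrightarrow> V m l K = 0"
  unfolding V_def by (intro sum.neutral) auto

lemma V_nonneg: "0 \<le> V m l K"
  unfolding V_def
  by (rule sum_nonneg) (auto intro!: add_nonneg_nonneg mult_nonneg_nonneg less_imp_le[OF ab_pos(1)] less_imp_le[OF ab_pos(2)])

lemma V_add: "V (\<lambda>k. m k + m' k) (\<lambda>k. l k + l' k) K = V m l K + V m' l' K"
  unfolding V_def by (simp add: sum.distrib[symmetric] algebra_simps)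

lemma V_ext: "K \<le> K' \<Longrightarrow> V (\<lambda>k. if k \<le> K then m k else 0) (\<lambda>k. if k \<le> K then l k else 0) K' = V m l K"
proof -
  assume KK: "K \<le> K'"
  show ?thesis unfolding V_def
    by (rule sum.mono_neutral_cong_left[symmetric]) (use KK in auto)
qed

lemma V_Suc: "V m l (Suc K) = V m l K + (of_nat (m (Suc K)) * aa (Suc K) + of_nat (l (Suc K)) * bb (Suc K))"
  unfolding V_def by (simp add: sum.cl_ivl_Suc)

lemma V_single: assumes "1 \<le> k"
  shows "V (\<lambda>j. if j = k then p else 0) (\<lambda>j. if j = k then q else 0) k = of_nat p * aa k + of_nat q * bb k"
proof -
  obtain k' where k: "k = Suc k'" using assms by (cases k) auto
  have "V (\<lambda>j. if j = k then p else 0) (\<lambda>j. if j = k then q else 0) k' = 0"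
    using k by (intro V_zero) auto
  then show ?thesis unfolding k V_Suc by simp
qed

definition MM :: "rat set" where "MM = {V m l K | m l K. True}"

lemma MM_add: assumes "x \<in> MM" "y \<in> MM" shows "x + y \<in> MM"
proof -
  obtain m1 l1 K1 where x: "x = V m1 l1 K1" using assms(1) unfolding MM_def by auto
  obtain m2 l2 K2 where y: "y = V m2 l2 K2" using assms(2) unfolding MM_def by auto
  let ?K = "max K1 K2"
  have "x = V (\<lambda>k. if k \<le> K1 then m1 k else 0) (\<lambda>k. if k \<le> K1 then l1 k else 0) ?K"
    unfolding x by (rule V_ext[symmetric]) simp
  moreover have "y = V (\<lambda>k. if k \<le> K2 then m2 k else 0) (\<lambda>k. if k \<le> K2 then l2 k else 0) ?K"
    unfolding y by (rule V_ext[symmetric]) simp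
  ultimately have "x + y = V (\<lambda>k. (if k \<le> K1 then m1 k else 0) + (if k \<le> K2 then m2 k else 0))
     (\<lambda>k. (if k \<le> K1 then l1 k else 0) + (if k \<le> K2 then l2 k else 0)) ?K"
    by (simp add: V_add)
  then show ?thesis unfolding MM_def by blast
qed

lemma aa_in: "1 \<le> k \<Longrightarrow> aa k \<in> MM"
proof -
  assume "1 \<le> k"
  then have "aa k = V (\<lambda>j. if j = k then 1 else 0) (\<lambda>j. if j = k then 0 else 0) k"
    using V_single[of k 1 0] by simp
  then show ?thesis unfolding MM_def by blast
qed

lemma bb_in: "1 \<le> k \<Longrightarrow> bb k \<in> MM"
proof -
  assume "1 \<le> k"
  then have "bb k = V (\<lambda>j. if j = k then 0 else 0) (\<lambda>j. if j = k then 1 else 0) k"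
    using V_single[of k 0 1] by simp
  then show ?thesis unfolding MM_def by blast
qed

lemma atom_decomp:
  assumes "x \<in> MM" "y \<in> MM"
    and key: "\<And>m l K. t = V m l K \<Longrightarrow> \<forall>k\<in>{1..K}. (m k = 0 \<and> l k = 0) \<or> (k = n \<and> m k + l k = 1)"
    and "t = x + y"
  shows "x = 0 \<or> y = 0"
proof -
  obtain m1 l1 K1 where x: "x = V m1 l1 K1" using assms(1) unfolding MM_def by auto
  obtain m2 l2 K2 where y: "y = V m2 l2 K2" using assms(2) unfolding MM_def by auto
  let ?K = "max K1 K2"
  define m1' where "m1' = (\<lambda>k. if k \<le> K1 then m1 k else 0)"
  define l1' where "l1' = (\<lambda>k. if k \<le> K1 then l1 k else 0)"
  define m2' where "m2' = (\<lambda>k. if k \<le> K2 then m2 k else 0)"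
  define l2' where "l2' = (\<lambda>k. if k \<le> K2 then l2 k else 0)"
  have x': "x = V m1' l1' ?K"
    unfolding x m1'_def l1'_def by (rule V_ext[symmetric]) simp
  have y': "y = V m2' l2' ?K"
    unfolding y m2'_def l2'_def by (rule V_ext[symmetric]) simp
  have "t = V (\<lambda>k. m1' k + m2' k) (\<lambda>k. l1' k + l2' k) ?K"
    using assms(4) x' y' by (simp add: V_add)
  from key[OF this] have K: "\<forall>k\<in>{1..?K}. (m1' k + m2' k = 0 \<and> l1' k + l2' k = 0) \<or>
      (k = n \<and> m1' k + m2' k + (l1' k + l2' k) = 1)" by simp
  show ?thesis
  proof (cases "\<forall>k\<in>{1..?K}. m1' k = 0 \<and> l1' k = 0")
    case True
    then have "x = 0" unfolding x' by (rule V_zero)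
    then show ?thesis by simp
  next
    case False
    then obtain k0 where k0: "k0 \<in> {1..?K}" "m1' k0 \<noteq> 0 \<or> l1' k0 \<noteq> 0" by auto
    from K k0(1) have "(m1' k0 + m2' k0 = 0 \<and> l1' k0 + l2' k0 = 0) \<or> k0 = n" by blast
    then have "k0 = n" using k0(2) by auto
    have "\<forall>k\<in>{1..?K}. m2' k = 0 \<and> l2' k = 0"
    proof
      fix k assume k: "k \<in> {1..?K}"
      show "m2' k = 0 \<and> l2' k = 0"
      proof (cases "k = n")
        case True
        then show ?thesis using K k k0 \<open>k0 = n\<close> by auto
      next
        case False
        then show ?thesis using K k by auto
      qed
    qed
    then have "y = 0" unfolding y' by (rule V_zero)
    then show ?thesis by simp
  qed
qed

lemma atom_aa: "1 \<le> n \<Longrightarrow> atom_of MM (aa n)"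
  unfolding atom_of_def
proof (intro conjI ballI impI)
  assume n: "1 \<le> n"
  show "aa n \<in> MM" using aa_in[OF n] .
  show "aa n \<noteq> 0" using ab_pos(1)[OF n] by simp
  fix x y assume "x \<in> MM" "y \<in> MM" "aa n = x + y"
  show "x = 0 \<or> y = 0"
  proof (rule atom_decomp[OF \<open>x \<in> MM\<close> \<open>y \<in> MM\<close> _ \<open>aa n = x + y\<close>])
    fix m l K assume "aa n = V m l K"
    from key_a[OF n this] show "\<forall>k\<in>{1..K}. (m k = 0 \<and> l k = 0) \<or> (k = n \<and> m k + l k = 1)"
      by auto
  qed
qed

lemma atom_bb: "1 \<le> n \<Longrightarrow> atom_of MM (bb n)"
  unfolding atom_of_def
proof (intro conjI ballI impI)
  assume n: "1 \<le> n"
  show "bb n \<in> MM" using bb_in[OF n] .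
  show "bb n \<noteq> 0" using ab_pos(2)[OF n] by simp
  fix x y assume "x \<in> MM" "y \<in> MM" "bb n = x + y"
  show "x = 0 \<or> y = 0"
  proof (rule atom_decomp[OF \<open>x \<in> MM\<close> \<open>y \<in> MM\<close> _ \<open>bb n = x + y\<close>])
    fix m l K assume "bb n = V m l K"
    from key_b[OF n this] show "\<forall>k\<in>{1..K}. (m k = 0 \<and> l k = 0) \<or> (k = n \<and> m k + l k = 1)"
      by auto
  qed
qed

fun AM :: "(nat \<Rightarrow> nat) \<Rightarrow> (nat \<Rightarrow> nat) \<Rightarrow> nat \<Rightarrow> rat multiset" where
  "AM m l 0 = {#}"
| "AM m l (Suc K) = AM m l K + replicate_mset (m (Suc K)) (aa (Suc K)) + replicate_mset (l (Suc K)) (bb (Suc K))"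

lemma AM_sum: "sum_mset (AM m l K) = V m l K"
  by (induction K) (simp_all add: V_Suc V_def)

lemma AM_atoms: "a \<in># AM m l K \<Longrightarrow> atom_of MM a"
proof (induction K)
  case 0
  then show ?case by simp
next
  case (Suc K)
  then show ?case using atom_aa[of "Suc K"] atom_bb[of "Suc K"]
    by (auto simp: in_replicate_mset split: if_splits)
qed

lemma MM_atomic: "atomic_monoid MM"
  unfolding atomic_monoid_def
proof (intro ballI impI)
  fix x assume "x \<in> MM" "x \<noteq> 0"
  then obtain m l K where x: "x = V m l K" unfolding MM_def by auto
  show "\<exists>A. A \<noteq> {#} \<and> (\<forall>a\<in>#A. atom_of MM a) \<and> sum_mset A = x"
  proof (intro exI conjI)
    show "\<forall>a\<in>#AM m l K. atom_of MM a" using AM_atoms by blast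
    show "sum_mset (AM m l K) = x" using AM_sum x by simp
    then show "AM m l K \<noteq> {#}" using \<open>x \<noteq> 0\<close> by auto
  qed
qed

lemma MM_puiseux: "puiseux_monoid MM"
  unfolding puiseux_monoid_def
proof (intro conjI ballI)
  have "0 = V (\<lambda>_. 0) (\<lambda>_. 0) 0" using V_zero[of 0] by simp
  then show "0 \<in> MM" unfolding MM_def by blast
  fix x assume "x \<in> MM" then show "0 \<le> x" unfolding MM_def using V_nonneg by auto
next
  fix x y assume "x \<in> MM" "y \<in> MM" then show "x + y \<in> MM" by (rule MM_add)
qed

lemma half_in: "1 / 2 ^ n \<in> MM"
proof -
  have "V (\<lambda>j. if j = Suc n then 2 else 0) (\<lambda>j. if j = Suc n then 2 else 0) (Suc n) = 2 * (aa (Suc n) + bb (Suc n))"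
    using V_single[of "Suc n" 2 2] by (simp add: algebra_simps)
  also have "\<dots> = 1 / 2 ^ n" unfolding aa_def bb_def xx_def by (simp add: power_one_over)
  finally show ?thesis unfolding MM_def by (metis (mono_tags, lifting) mem_Collect_eq)
qed

lemma Z_add: "x \<in> Z_half_third \<Longrightarrow> y \<in> Z_half_third \<Longrightarrow> x + y \<in> Z_half_third"
proof -
  assume "x \<in> Z_half_third" "y \<in> Z_half_third"
  then obtain k1 m1 n1 k2 m2 n2 where x: "x = of_int k1 / (2 ^ m1 * 3 ^ n1)" and y: "y = of_int k2 / (2 ^ m2 * 3 ^ n2)"
    unfolding Z_half_third_def by auto
  have "x + y = of_int (k1 * 2^m2 * 3^n2 + k2 * 2^m1 * 3^n1) / (2 ^ (m1 + m2) * 3 ^ (n1 + n2))"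
    unfolding x y by (simp add: field_simps power_add)
  then show ?thesis unfolding Z_half_third_def by blast
qed

lemma Z_elem: "(of_int c / (2 ^ i * 3 ^ j) :: rat) \<in> Z_half_third"
  unfolding Z_half_third_def by blast

lemma Z_mult: "x \<in> Z_half_third \<Longrightarrow> of_nat c * x \<in> Z_half_third"
proof -
  assume "x \<in> Z_half_third"
  then obtain k m n where x: "x = of_int k / (2 ^ m * 3 ^ n)" unfolding Z_half_third_def by auto
  have "of_nat c * x = of_int (int c * k) / (2 ^ m * 3 ^ n)" unfolding x by simp
  then show ?thesis using Z_elem by metis
qed

lemma Z_sum: "finite A \<Longrightarrow> (\<forall>k\<in>A. f k \<in> Z_half_third) \<Longrightarrow> sum f A \<in> Z_half_third"
proof (induction A rule: finite_induct)
  case empty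
  have "(0::rat) = of_int 0 / (2^0 * 3^0)" by simp
  then show ?case using Z_elem by (metis sum.empty)
next
  case (insert x F)
  then show ?case by (simp add: Z_add)
qed

lemma aa_Z: "aa k \<in> Z_half_third"
proof -
  have "aa k = of_int 1 / (2^0 * 3^k) + of_int (-1) / (2^(2*k+1) * 3^0)"
    unfolding aa_def yy_def zz_def by (simp add: power_one_over power_mult)
  then show ?thesis using Z_add Z_elem by metis
qed

lemma bb_Z: "bb k \<in> Z_half_third"
proof -
  have "bb k = (of_int 1 / (2^k * 3^0) + of_int (-1) / (2^0 * 3^k)) + of_int 1 / (2^(2*k+1) * 3^0)"
    unfolding bb_def xx_def yy_def zz_def by (simp add: power_one_over power_mult)
  then show ?thesis using Z_add Z_elem by metis
qed

lemma MM_sub: "MM \<subseteq> Z_half_third"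
proof
  fix x assume "x \<in> MM"
  then obtain m l K where x: "x = V m l K" unfolding MM_def by auto
  show "x \<in> Z_half_third" unfolding x V_def
    by (rule Z_sum) (auto intro!: Z_add Z_mult aa_Z bb_Z)
qed

theorem proposition5p1:
  shows "\<exists>M. puiseux_monoid M \<and> atomic_monoid M \<and> M \<subseteq> Z_half_third \<and>
             (\<forall>n::nat. 1 / 2 ^ n \<in> M)"
  using MM_puiseux MM_atomic MM_sub half_in by blast

end
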